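(* Let $S_n$ be the star on $n$ vertices with edge set $E$, let $f=\{i,j\}\notin E$ be a pair of distinct vertices, and let $B=E\cup\{f\}$. Let $\det(xI-\mathfrak{D}_2(S_n)[B,B])=\sum_{k=0}^n a_kx^k$ and let $|a_t|=\max_k|a_k|$. Then $\lfloor\frac{n-2}{2}\rfloor\le t\le\lceil\frac n2\rceil$.
   Context: For a tree $T$, let $\mathcal{V}_2$ be the set of 2-element vertex subsets (edges regarded as elements of $\mathcal{V}_2$). The 2-Steiner distance matrix $\mathfrak{D}_2(T)$ is indexed by $\mathcal{V}_2$, with entry in row $\{i,j\}$, column $\{k,l\}$ equal to the minimum number of edges of a connected subtree of $T$ whose vertex set contains $i,j,k,l$. $M[B,B]$ denotes the principal submatrix with rows and columns indexed by $B$. *)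

theory Defs
  imports "Jordan_Normal_Form.Char_Poly"
begin

text \<open>Graphs are given by a set of (2-element) edges.  A subgraph with vertex set U and
edge set F is connected if any two vertices of U are joined by a walk using edges of F.\<close>

definition sg_connected :: "'a set \<Rightarrow> 'a set set \<Rightarrow> bool" where
  "sg_connected U F \<longleftrightarrow>
     (\<forall>x\<in>U. \<forall>y\<in>U. (x, y) \<in> ({(a, b). {a, b} \<in> F})\<^sup>*)"

definition steiner_dist :: "'a set set \<Rightarrow> 'a set \<Rightarrow> nat" where
  "steiner_dist E W = Min {card F | F U. F \<subseteq> E \<and> W \<subseteq> U \<and> (\<forall>e\<in>F. e \<subseteq> U)
                                    \<and> sg_connected U F}"

text \<open>2-Steiner distance matrix entry for rows/columns indexed by 2-subsets.\<close>

definition steiner2 :: "'a set set \<Rightarrow> 'a set \<Rightarrow> 'a set \<Rightarrow> int" where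
  "steiner2 E p q = int (steiner_dist E (p \<union> q))"

definition star_edges :: "nat \<Rightarrow> nat set set" where
  "star_edges n = {{0, k} | k. 1 \<le> k \<and> k < n}"

end

theory Submission
  imports Defs
begin


lemma star_edges_eq: "star_edges n = (\<lambda>k. {0, k}) ` {1..<n}"
  unfolding star_edges_def by auto

lemma finite_star_edges: "finite (star_edges n)"
  unfolding star_edges_eq by simp

lemma star_edge_in: "{0, l} \<in> star_edges n \<longleftrightarrow> 1 \<le> l \<and> l < n"
  unfolding star_edges_def by (auto simp: doubleton_eq_iff)

lemma edge_forced:
  assumes F: "F \<subseteq> star_edges n" and con: "sg_connected U F" and WU: "W \<subseteq> U"
    and l: "l \<in> W" "l \<noteq> 0" and w: "w \<in> W" "w \<noteq> l"
  shows "{0, l} \<in> F"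
proof -
  have "(l, w) \<in> ({(a, b). {a, b} \<in> F})\<^sup>*" using con WU l w unfolding sg_connected_def by auto
  then show ?thesis
  proof (rule converse_rtranclE)
    assume "l = w" then show ?thesis using w by simp
  next
    fix y assume "(l, y) \<in> {(a, b). {a, b} \<in> F}"
    then have "{l, y} \<in> F" by simp
    then have "{l, y} \<in> star_edges n" using F by auto
    then obtain k where k: "{l, y} = {0, k}" "1 \<le> k" by (auto simp: star_edges_def)
    then have "l = k \<and> y = 0" using l(2) by (auto simp: doubleton_eq_iff)
    then show ?thesis using \<open>{l, y} \<in> F\<close> by (simp add: insert_commute)
  qed
qed

lemma sd_star:
  assumes W: "W \<subseteq> {..<n}" and two: "a \<in> W" "b \<in> W" "a \<noteq> b"
  shows "steiner_dist (star_edges n) W = card (W - {0})"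
proof -
  let ?S = "{card F | F U. F \<subseteq> star_edges n \<and> W \<subseteq> U \<and> (\<forall>e\<in>F. e \<subseteq> U) \<and> sg_connected U F}"
  let ?L = "W - {0}"
  have finW: "finite W" using W finite_subset by blast
  have other: "\<exists>w\<in>W. w \<noteq> l" if "l \<in> W" for l using two by (cases "a = l") auto
  have lower: "card ?L \<le> card F" if F: "F \<subseteq> star_edges n" and WU: "W \<subseteq> U" and con: "sg_connected U F" for F U
  proof -
    have sub: "(\<lambda>l. {0, l}) ` ?L \<subseteq> F"
    proof
      fix e assume "e \<in> (\<lambda>l. {0, l}) ` ?L"
      then obtain l where l: "l \<in> W" "l \<noteq> 0" and e: "e = {0, l}" by auto
      obtain w where "w \<in> W" "w \<noteq> l" using other[OF l(1)] by auto
      then show "e \<in> F" using edge_forced[OF F con WU l] e by simp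
    qed
    have inj: "inj_on (\<lambda>l. {0, l}) ?L" by (auto simp: inj_on_def doubleton_eq_iff)
    have "finite F" using F finite_star_edges finite_subset by blast
    then have "card ((\<lambda>l. {0, l}) ` ?L) \<le> card F" using sub card_mono by blast
    then show ?thesis using card_image[OF inj] by simp
  qed
  define F0 where "F0 = (\<lambda>l. {0, l}) ` ?L"
  define U0 where "U0 = insert 0 W"
  have F0E: "F0 \<subseteq> star_edges n" unfolding F0_def using W by (auto simp: star_edge_in)
  have con0: "sg_connected U0 F0"
    unfolding sg_connected_def
  proof (intro ballI)
    fix x y assume x: "x \<in> U0" and y: "y \<in> U0"
    have "(x, 0) \<in> ({(a, b). {a, b} \<in> F0})\<^sup>*"
    proof (cases "x = 0")
      case False
      then have "(x, 0) \<in> {(a, b). {a, b} \<in> F0}" using x unfolding F0_def U0_def by (auto simp: insert_commute)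
      then show ?thesis by auto
    qed simp
    moreover have "(0, y) \<in> ({(a, b). {a, b} \<in> F0})\<^sup>*"
    proof (cases "y = 0")
      case False
      then have "(0, y) \<in> {(a, b). {a, b} \<in> F0}" using y unfolding F0_def U0_def by auto
      then show ?thesis by auto
    qed simp
    ultimately show "(x, y) \<in> ({(a, b). {a, b} \<in> F0})\<^sup>*" by (rule rtrancl_trans)
  qed
  have inS: "card F0 \<in> ?S"
    using F0E con0 unfolding F0_def U0_def by blast
  have cF0: "card F0 \<le> card ?L" unfolding F0_def by (rule card_image_le) (use finW in auto)
  have finS: "finite ?S"
  proof (rule finite_subset)
    show "?S \<subseteq> {..card (star_edges n)}"
      using finite_star_edges by (auto intro: card_mono)
  qed simp
  have "Min ?S = card ?L"
  proof (rule antisym)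
    show "Min ?S \<le> card ?L" using Min_le[OF finS inS] cF0 by simp
    have ne: "?S \<noteq> {}" using inS by auto
    have "\<forall>s\<in>?S. card ?L \<le> s" using lower by blast
    then show "card ?L \<le> Min ?S" using Min_ge_iff[OF finS ne] by blast
  qed
  then show ?thesis unfolding steiner_dist_def .
qed


definition cz :: "nat \<Rightarrow> int \<Rightarrow> int" where
  "cz N j = (if j < 0 then 0 else int (N choose nat j))"

lemma cz_nonneg: "0 \<le> cz N j" by (simp add: cz_def)

lemma cz_pos: "0 \<le> j \<Longrightarrow> j \<le> int N \<Longrightarrow> 1 \<le> cz N j"
  unfolding cz_def by (simp add: Suc_le_eq nat_le_iff)

lemma cz_big: "j > int N \<Longrightarrow> cz N j = 0"
  unfolding cz_def by auto

lemma cz_F1: "j * cz N j = (int N - j + 1) * cz N (j - 1)"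
proof (cases "j \<le> 0")
  case True
  then show ?thesis by (cases "j = 0") (auto simp: cz_def)
next
  case False
  define m where "m = nat (j - 1)"
  have m: "j = int (Suc m)" using False unfolding m_def by simp
  have nat: "Suc m * (N choose Suc m) = (N - m) * (N choose m)"
    using binomial_absorption[of m N] binomial_absorb_comp[of N m] by simp
  show ?thesis
  proof (cases "m \<le> N")
    case True
    then have "int (Suc m) * int (N choose Suc m) = (int N - int m) * int (N choose m)"
      using nat by (metis of_nat_diff of_nat_mult)
    moreover have "nat j = Suc m" "nat (j - 1) = m" using m by auto
    ultimately show ?thesis using m unfolding cz_def by simp
  next
    case False
    moreover have "nat j = Suc m" "nat (j - 1) = m" using m by auto
    ultimately show ?thesis using m unfolding cz_def by (simp add: binomial_eq_0)
  qed
qed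

lemma cz_mono_up: assumes "2 * j \<le> int N + 1" shows "cz N (j - 1) \<le> cz N j"
proof (cases "j \<le> 0")
  case True then show ?thesis by (simp add: cz_def cz_nonneg)
next
  case False
  have F: "j * cz N j = (int N - j + 1) * cz N (j - 1)" by (rule cz_F1)
  have "j * cz N (j - 1) \<le> (int N - j + 1) * cz N (j - 1)"
    using assms by (intro mult_right_mono) (auto simp: cz_nonneg)
  then have "j * cz N (j - 1) \<le> j * cz N j" using F by simp
  then show ?thesis using False by simp
qed

lemma cz_mono_down: assumes "int N + 1 \<le> 2 * j" shows "cz N j \<le> cz N (j - 1)"
proof -
  have F: "j * cz N j = (int N - j + 1) * cz N (j - 1)" by (rule cz_F1)
  have "(int N - j + 1) * cz N (j - 1) \<le> j * cz N (j - 1)"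
    using assms by (intro mult_right_mono) (auto simp: cz_nonneg)
  then have "j * cz N j \<le> j * cz N (j - 1)" using F by simp
  moreover have "j > 0" using assms by simp
  ultimately show ?thesis by simp
qed

lemma cz_key: "(int N - k + 1) * (cz N k - cz N (k - 1)) = (int N - 2 * k + 1) * cz N k"
  using cz_F1[of k N] by (simp add: algebra_simps)

definition bco :: "nat \<Rightarrow> int \<Rightarrow> int" where
  "bco N k = (2 * int N + 4) * cz N (k - 2) + 7 * (int N + 1) * cz N (k - 1)
     + (int N + 2) * cz N k - cz N (k - 3)"

lemma bco_inc: assumes k0: "0 \<le> k" and kN: "2 * k + 1 \<le> int N"
  shows "bco N k < bco N (k + 1)"
proof -
  let ?c = "cz N"
  have d1: "0 \<le> ?c (k - 1) - ?c (k - 2)" using cz_mono_up[of "k - 1" N] kN by simp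
  have d2: "0 \<le> ?c k - ?c (k - 1)" using cz_mono_up[of k N] kN by simp
  have d3: "0 \<le> ?c (k + 1) - ?c k" using cz_mono_up[of "k + 1" N] kN by simp
  have d0: "?c (k - 2) \<le> ?c (k - 1)" using d1 by simp
  have ck: "1 \<le> ?c k" using cz_pos[of k N] k0 kN by simp
  have e1: "0 \<le> (2 * int N + 4) * (?c (k - 1) - ?c (k - 2))" using d1 by simp
  have e3: "0 \<le> (int N + 2) * (?c (k + 1) - ?c k)" using d3 by simp
  have "2 * ?c k \<le> (int N - 2 * k + 1) * ?c k"
    using kN ck by (intro mult_right_mono) auto
  also have "\<dots> = (int N - k + 1) * (?c k - ?c (k - 1))" by (rule cz_key[symmetric])
  also have "\<dots> \<le> (int N + 1) * (?c k - ?c (k - 1))"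
    using d2 k0 by (intro mult_right_mono) auto
  finally have e2: "2 * ?c k \<le> (int N + 1) * (?c k - ?c (k - 1))" .
  have eq: "bco N (k + 1) - bco N k = (2 * int N + 4) * (?c (k - 1) - ?c (k - 2))
      + 7 * ((int N + 1) * (?c k - ?c (k - 1))) + (int N + 2) * (?c (k + 1) - ?c k)
      - (?c (k - 2) - ?c (k - 3))"
    unfolding bco_def by (simp add: algebra_simps)
  have "?c (k - 3) \<ge> 0" by (rule cz_nonneg)
  then show ?thesis using eq e1 e2 e3 d0 d2 ck by linarith
qed

lemma lin_aux:
  fixes B X1 X2 X3 D d1 d2 :: int
  assumes "B = X1 + 7 * X2 - X3 + D" "0 \<le> X1" "0 < X2" "0 \<le> - X3" "- d1 \<le> X1" "- d2 \<le> X2"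
    "0 \<le> D \<or> - D \<le> X1"
  shows "0 < B"
  using assms by linarith

lemma bco_dec: assumes k1: "int N + 3 \<le> 2 * k" and kN: "k \<le> int N + 1"
  shows "bco N (k + 1) < bco N k"
proof -
  let ?c = "cz N"
  have d1: "?c (k - 1) - ?c (k - 2) \<le> 0" using cz_mono_down[of N "k - 1"] k1 by simp
  have d2: "?c k - ?c (k - 1) < 0"
  proof (cases "k \<le> int N")
    case True
    have ck: "1 \<le> ?c k" using cz_pos[of k N] True k1 by simp
    have "(int N - k + 1) * (?c k - ?c (k - 1)) = (int N - 2 * k + 1) * ?c k" by (rule cz_key)
    also have "\<dots> < 0" using ck k1 by (intro mult_neg_pos) auto
    finally show ?thesis using True by (simp add: mult_less_0_iff)
  next
    case False
    then have "k = int N + 1" using kN by simp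
    then show ?thesis by (simp add: cz_def)
  qed
  have d3: "?c (k + 1) - ?c k \<le> 0" using cz_mono_down[of N "k + 1"] k1 by simp
  have e1: "0 \<le> - ((2 * int N + 4) * (?c (k - 1) - ?c (k - 2)))" using d1
    by (simp add: mult_nonneg_nonpos)
  have e2: "0 < - ((int N + 1) * (?c k - ?c (k - 1)))" using d2
    by (simp add: mult_pos_neg)
  have e3: "0 \<le> - ((int N + 2) * (?c (k + 1) - ?c k))" using d3 by (simp add: mult_nonneg_nonpos)
  have e2': "- (?c k - ?c (k - 1)) \<le> - ((int N + 1) * (?c k - ?c (k - 1)))"
    using mult_nonneg_nonpos[of "int N" "?c k - ?c (k - 1)"] d2 by (simp add: algebra_simps)
  have e1': "- (?c (k - 1) - ?c (k - 2)) \<le> - ((2 * int N + 4) * (?c (k - 1) - ?c (k - 2)))"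
    using mult_nonneg_nonpos[of "2 * int N + 3" "?c (k - 1) - ?c (k - 2)"] d1 by (simp add: algebra_simps)
  have eq: "bco N k - bco N (k + 1) = - ((2 * int N + 4) * (?c (k - 1) - ?c (k - 2)))
      + 7 * (- ((int N + 1) * (?c k - ?c (k - 1)))) - (int N + 2) * (?c (k + 1) - ?c k)
      + (?c (k - 2) - ?c (k - 3))"
    unfolding bco_def by (simp add: algebra_simps)
  have "0 \<le> ?c (k - 2) - ?c (k - 3) \<or> ?c (k - 3) - ?c (k - 2) \<le> - ((2 * int N + 4) * (?c (k - 1) - ?c (k - 2)))"
  proof (cases "2 * (k - 2) \<le> int N + 1")
    case True
    then show ?thesis using cz_mono_up[of "k - 2" N] by simp
  next
    case False
    define u where "u = 2 * k - int N - 3"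
    define v where "v = int N - k + 3"
    have u2: "2 \<le> u" "2 \<le> v" using False kN unfolding u_def v_def by auto
    have uv: "u + v = k" unfolding u_def v_def by simp
    have "1 * 1 \<le> (u - 1) * (v - 1)" using u2 by (intro mult_mono) auto
    then have uvk: "k \<le> u * v" using uv by (simp add: algebra_simps)
    have k2: "2 \<le> k" using u2 uv by simp
    have "(k - 1) * (k - 2) \<le> k * k" using k2 by (intro mult_mono) auto
    also have "\<dots> \<le> (2 * int N + 4) * k" using k2 kN by (intro mult_right_mono) auto
    also have "\<dots> \<le> (2 * int N + 4) * (u * v)" using uvk by (intro mult_left_mono) auto
    finally have P: "(k - 1) * (k - 2) \<le> (2 * int N + 4) * (u * v)" .
    let ?d = "?c (k - 2) - ?c (k - 1)"
    have F1: "(k - 1) * ?c (k - 1) = (v - 1) * ?c (k - 2)"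
      using cz_F1[of "k - 1" N] unfolding v_def by (simp add: algebra_simps)
    have F2: "(k - 2) * ?c (k - 2) = v * ?c (k - 3)"
      using cz_F1[of "k - 2" N] unfolding v_def by (simp add: algebra_simps)
    have Fd: "(k - 1) * ?d = u * ?c (k - 2)"
      using F1 unfolding u_def v_def by (simp add: algebra_simps)
    have "v * (k - 1) * ?c (k - 3) = (k - 1) * (k - 2) * ?c (k - 2)"
      using F2 by (simp add: algebra_simps)
    also have "\<dots> \<le> (2 * int N + 4) * (u * v) * ?c (k - 2)"
      using P by (intro mult_right_mono) (auto simp: cz_nonneg)
    also have "\<dots> = (2 * int N + 4) * v * (u * ?c (k - 2))" by (simp add: algebra_simps)
    also have "\<dots> = v * (k - 1) * ((2 * int N + 4) * ?d)" by (subst Fd[symmetric]) (simp add: algebra_simps)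
    finally have "v * (k - 1) * ?c (k - 3) \<le> v * (k - 1) * ((2 * int N + 4) * ?d)" .
    moreover have "0 < v * (k - 1)" using u2 k2 by simp
    ultimately have "?c (k - 3) \<le> (2 * int N + 4) * ?d" by (simp add: mult_le_cancel_left_pos)
    then have "?c (k - 3) - ?c (k - 2) \<le> - ((2 * int N + 4) * (?c (k - 1) - ?c (k - 2)))"
      using cz_nonneg[of N "k - 2"] by (simp add: algebra_simps)
    then show ?thesis by blast
  qed
  then show ?thesis using lin_aux[OF eq e1 e2 e3 e1' e2'] by linarith
qed

lemma bco_nonneg: assumes "k \<le> int N + 2" shows "0 \<le> bco N k"
proof -
  let ?c = "cz N"
  have "?c (k - 3) \<le> (2 * int N + 4) * ?c (k - 2)"
  proof (cases "k - 3 < 0")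
    case True then show ?thesis by (simp add: cz_def cz_nonneg)
  next
    case False
    have F: "(k - 2) * ?c (k - 2) = (int N - k + 3) * ?c (k - 3)"
      using cz_F1[of "k - 2" N] by (simp add: algebra_simps)
    have "?c (k - 3) \<le> (int N - k + 3) * ?c (k - 3)"
      using assms cz_nonneg[of N "k - 3"] by (simp add: mult_le_cancel_right1)
    also have "\<dots> = (k - 2) * ?c (k - 2)" using F by simp
    also have "\<dots> \<le> (2 * int N + 4) * ?c (k - 2)"
      using assms cz_nonneg[of N "k - 2"] by (intro mult_right_mono) auto
    finally show ?thesis .
  qed
  moreover have "0 \<le> 7 * (int N + 1) * ?c (k - 1)" "0 \<le> (int N + 2) * ?c k"
    by (auto simp: cz_nonneg)
  ultimately show ?thesis unfolding bco_def by linarith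
qed

lemma bco_top: "bco N (int N + 3) = -1" "bco N (int N + 2) = int N + 4"
proof -
  have "int N * cz N (int N) = 1 * cz N (int N - 1)" using cz_F1[of "int N" N] by simp
  moreover have "cz N (int N) = 1" by (simp add: cz_def)
  ultimately have c1: "cz N (int N - 1) = int N" by simp
  show "bco N (int N + 3) = -1" unfolding bco_def by (simp add: cz_big) (simp add: cz_def)
  show "bco N (int N + 2) = int N + 4" unfolding bco_def using c1 by (simp add: cz_big) (simp add: cz_def)
qed

lemma argmax:
  fixes N t :: nat and a :: "nat \<Rightarrow> int"
  assumes a: "\<And>k. a k = - bco N (int k)" and t: "t \<le> N + 3"
    and mx: "\<bar>a t\<bar> = Max {\<bar>a k\<bar> | k. k \<le> N + 3}"
  shows "(N + 1) div 2 \<le> t \<and> t \<le> (N + 4) div 2"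
proof -
  have fin: "finite {\<bar>a k\<bar> | k. k \<le> N + 3}" by simp
  have le: "\<bar>a k\<bar> \<le> \<bar>a t\<bar>" if "k \<le> N + 3" for k
    unfolding mx using that by (intro Max_ge[OF fin]) auto
  have ab: "\<bar>a k\<bar> = bco N (int k)" if "k \<le> N + 2" for k
    using bco_nonneg[of "int k" N] that a[of k] by simp
  have "\<not> t < (N + 1) div 2"
  proof
    assume h: "t < (N + 1) div 2"
    have "bco N (int t) < bco N (int t + 1)" using h by (intro bco_inc) auto
    moreover have "\<bar>a (t + 1)\<bar> \<le> \<bar>a t\<bar>" using h by (intro le) auto
    moreover have "t + 1 \<le> N + 2" using h by simp
    ultimately show False using ab[of t] ab[of "t + 1"] by (simp add: add.commute)
  qed
  moreover have "\<not> (N + 4) div 2 < t"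
  proof
    assume h: "(N + 4) div 2 < t"
    show False
    proof (cases "t = N + 3")
      case True
      have "\<bar>a (N + 2)\<bar> \<le> \<bar>a t\<bar>" by (intro le) auto
      then show False using True a[of t] a[of "N + 2"] bco_top[of N] by (simp add: add.commute)
    next
      case False
      then obtain k where k: "t = k + 1" using h by (cases t) auto
      have "bco N (int k + 1) < bco N (int k)" using h k False t by (intro bco_dec) auto
      moreover have "\<bar>a k\<bar> \<le> \<bar>a t\<bar>" using t k by (intro le) auto
      moreover have "t \<le> N + 2" using t False by simp
      ultimately show False using ab[of k] ab[of t] k by (simp add: add.commute)
    qed
  qed
  ultimately show ?thesis by simp
qed


lemma coeff_binom_power: "coeff ([:1, 1:] ^ N :: int poly) m = cz N (int m)"
proof (cases "m \<le> N")
  case True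
  then show ?thesis using coeff_linear_poly_power[of m N "1::int" 1] by (simp add: cz_def)
next
  case False
  have "degree ([:1, 1:] ^ N :: int poly) = N" by (simp add: degree_power_eq)
  then show ?thesis using False by (simp add: coeff_eq_0 cz_def binomial_eq_0)
qed

definition qpoly :: "nat \<Rightarrow> int poly" where
  "qpoly N = [: - (int N + 2), - 7 * (int N + 1), - (2 * int N + 4), 1 :]"

lemma coeff_final: "coeff ([:1, 1:] ^ N * qpoly N) k = - bco N (int k)"
proof -
  have c: "coeff (qpoly N * [:1, 1:] ^ N) k = - bco N (int k)"
  proof (cases k)
    case 0 then show ?thesis by (simp add: qpoly_def bco_def coeff_binom_power mult_pCons_left cz_def algebra_simps)
  next
    case (Suc k1)
    then show ?thesis
    proof (cases k1)
      case 0 then show ?thesis using Suc by (simp add: qpoly_def bco_def coeff_binom_power mult_pCons_left cz_def algebra_simps)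
    next
      case (Suc k2)
      then show ?thesis
      proof (cases k2)
        case 0 then show ?thesis using Suc \<open>k = Suc k1\<close> by (simp add: qpoly_def bco_def coeff_binom_power mult_pCons_left cz_def algebra_simps)
      next
        case (Suc k3)
        have e: "int k - 1 = int k2 + 1" "int k - 2 = int k2" "int k - 3 = int k3" "int k = int k2 + 2"
          using Suc \<open>k1 = Suc k2\<close> \<open>k = Suc k1\<close> by auto
        show ?thesis using Suc \<open>k1 = Suc k2\<close> \<open>k = Suc k1\<close> unfolding bco_def e
          by (simp add: qpoly_def coeff_binom_power mult_pCons_left algebra_simps)
      qed
    qed
  qed
  then show ?thesis by (simp add: mult.commute)
qed


lemma char_poly_diag_column: fixes A :: "'a :: idom mat"
  assumes 0: "\<And> j. j < n \<Longrightarrow> j \<noteq> i \<Longrightarrow> A $$ (j,i) = 0"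
  and A: "A \<in> carrier_mat n n"
  and i: "i < n"
shows "char_poly A = [: - (A $$ (i,i)), 1 :] * char_poly (mat_delete A i i)"
proof -
  let ?sum = "[:0, 1:] \<cdot>\<^sub>m 1\<^sub>m n + map_mat (\<lambda>a. [:- a:]) A"
  define Sum where "Sum = ?sum"
  let ?f = "\<lambda> j. Sum $$ (j, i) * cofactor Sum j i"
  have Sum: "Sum \<in> carrier_mat n n" using A unfolding Sum_def by auto
  from A have id: "dim_row A = n" by auto
  have "char_poly A = (\<Sum>j<n. ?f j)"
    unfolding char_poly_def[of A] char_poly_matrix_def
    using laplace_expansion_column[OF Sum i] unfolding Sum_def using A by simp
  also have "\<dots> = ?f i + sum ?f ({..<n} - {i})"
    by (rule sum.remove[of _ i], insert i, auto)
  also have "\<dots> = ?f i"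
  proof (subst sum.neutral, intro ballI)
    fix j
    assume "j \<in> {..<n} - {i}"
    hence j: "j < n" and ji: "j \<noteq> i" by auto
    show "?f j = 0" unfolding Sum_def using ji j i A 0[OF j] by simp
  qed simp
  also have "?f i = [: - (A $$ (i,i)), 1 :] * (cofactor Sum i i)"
    unfolding Sum_def using i A by simp
  also have "cofactor Sum i i = det (mat_delete Sum i i)"
    unfolding cofactor_def by simp
  also have "\<dots> = char_poly (mat_delete A i i)"
    unfolding char_poly_def char_poly_matrix_def Sum_def
  proof (rule arg_cong[of _ _ det])
    show "mat_delete ?sum i i = [:0, 1:] \<cdot>\<^sub>m 1\<^sub>m (dim_row (mat_delete A i i)) + map_mat (\<lambda>a. [:- a:]) (mat_delete A i i)"
      using i A by (auto simp: mat_delete_def)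
  qed
  finally show ?thesis .
qed

lemma char_poly_reduce3:
  fixes g :: "nat \<Rightarrow> nat \<Rightarrow> int"
  assumes "3 \<le> n"
    and col: "\<And>r c. r < n \<Longrightarrow> c < n \<Longrightarrow> 3 \<le> c \<Longrightarrow> g r c = (if r = c then -1 else 0)"
  shows "char_poly (mat n n (\<lambda>(r, c). g r c)) = [:1, 1:] ^ (n - 3) * char_poly (mat 3 3 (\<lambda>(r, c). g r c))"
  using assms
proof (induction n rule: dec_induct)
  case base
  then show ?case by simp
next
  case (step m)
  let ?A = "mat (Suc m) (Suc m) (\<lambda>(r, c). g r c)"
  have "char_poly ?A = [: - (?A $$ (m,m)), 1 :] * char_poly (mat_delete ?A m m)"
    by (rule char_poly_diag_column[where n = "Suc m"]) (use step in auto)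
  also have "mat_delete ?A m m = mat m m (\<lambda>(r, c). g r c)"
    by (auto simp: mat_delete_def)
  also have "?A $$ (m,m) = -1" using step by simp
  finally have "char_poly ?A = [:1, 1:] * char_poly (mat m m (\<lambda>(r, c). g r c))" by simp
  also have "\<dots> = [:1, 1:] * ([:1, 1:] ^ (m - 3) * char_poly (mat 3 3 (\<lambda>(r, c). g r c)))"
    using step by simp
  also have "\<dots> = [:1, 1:] ^ (Suc m - 3) * char_poly (mat 3 3 (\<lambda>(r, c). g r c))"
  proof -
    have "Suc m - 3 = Suc (m - 3)" using step(1) by simp
    then show ?thesis by (simp only: power_Suc mult.assoc)
  qed
  finally show ?case .
qed

lemma det3: assumes A: "A \<in> carrier_mat 3 3"
  shows "det A = A $$ (0,0) * (A $$ (1,1) * A $$ (2,2) - A $$ (1,2) * A $$ (2,1))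
    - A $$ (1,0) * (A $$ (0,1) * A $$ (2,2) - A $$ (0,2) * A $$ (2,1))
    + A $$ (2,0) * (A $$ (0,1) * A $$ (1,2) - A $$ (0,2) * A $$ (1,1))"
proof -
  have d2: "det B = B $$ (0,0) * B $$ (1,1) - B $$ (1,0) * B $$ (0,1)" if B: "B \<in> carrier_mat 2 2" for B :: "'a mat"
  proof -
    have "det B = (\<Sum>i<2. B $$ (i,0) * cofactor B i 0)" by (rule laplace_expansion_column[OF B]) simp
    also have "\<dots> = B $$ (0,0) * B $$ (1,1) - B $$ (1,0) * B $$ (0,1)"
      using B by (simp add: cofactor_def numeral_2_eq_2 det_single mat_delete_def lessThan_Suc)
    finally show ?thesis .
  qed
  have "det A = (\<Sum>i<3. A $$ (i,0) * cofactor A i 0)" by (rule laplace_expansion_column[OF A]) simp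
  also have "\<dots> = A $$ (0,0) * cofactor A 0 0 + A $$ (1,0) * cofactor A 1 0 + A $$ (2,0) * cofactor A 2 0"
    by (simp add: numeral_3_eq_3 numeral_2_eq_2 lessThan_Suc)
  also have "cofactor A 0 0 = A $$ (1,1) * A $$ (2,2) - A $$ (1,2) * A $$ (2,1)"
    unfolding cofactor_def using A by (subst d2) (auto simp: mat_delete_def numeral_2_eq_2)
  also have "cofactor A 1 0 = - (A $$ (0,1) * A $$ (2,2) - A $$ (0,2) * A $$ (2,1))"
    unfolding cofactor_def using A by (subst d2) (auto simp: mat_delete_def numeral_2_eq_2)
  also have "cofactor A 2 0 = A $$ (0,1) * A $$ (1,2) - A $$ (0,2) * A $$ (1,1)"
    unfolding cofactor_def using A by (subst d2) (auto simp: mat_delete_def numeral_2_eq_2)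
  finally show ?thesis by (simp add: algebra_simps)
qed


definition Qm :: "nat \<Rightarrow> int mat" where
  "Qm n = mat n n (\<lambda>(k, c). (if k = c then 1 else 0) - (if k = 1 \<and> c = 3 then 1 else 0)
      - (if k = 2 \<and> 4 \<le> c then 1 else 0))"

definition Qi :: "nat \<Rightarrow> int mat" where
  "Qi n = mat n n (\<lambda>(k, c). (if k = c then 1 else 0) + (if k = 1 \<and> c = 3 then 1 else 0)
      + (if k = 2 \<and> 4 \<le> c then 1 else 0))"

lemma sum_delta_aux: "finite A \<Longrightarrow> (\<Sum>k\<in>A. f k * (if k = c then 1 else 0)) = (if c \<in> A then f c else (0::int))"
  by (simp add: if_distrib sum.delta' cong: if_cong)

lemma mult_Qm: assumes X: "X \<in> carrier_mat n n" and n: "4 \<le> n" and r: "r < n" and c: "c < n"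
  shows "(X * Qm n) $$ (r, c) = X $$ (r, c) - (if c = 3 then X $$ (r, 1) else 0) - (if 4 \<le> c then X $$ (r, 2) else 0)"
proof -
  have "(X * Qm n) $$ (r, c) = (\<Sum>k\<in>{0..<n}. X $$ (r, k) * ((if k = c then 1 else 0) - (if k = 1 \<and> c = 3 then 1 else 0)
      - (if k = 2 \<and> 4 \<le> c then 1 else 0)))"
    using X r c by (simp add: Qm_def scalar_prod_def)
  also have "\<dots> = (\<Sum>k\<in>{0..<n}. X $$ (r, k) * (if k = c then 1 else 0)
     - (if c = 3 then 1 else 0) * (X $$ (r, k) * (if k = 1 then 1 else 0))
     - (if 4 \<le> c then 1 else 0) * (X $$ (r, k) * (if k = 2 then 1 else 0)))"
    by (rule sum.cong) auto
  also have "\<dots> = (\<Sum>k\<in>{0..<n}. X $$ (r, k) * (if k = c then 1 else 0))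
     - (if c = 3 then 1 else 0) * (\<Sum>k\<in>{0..<n}. X $$ (r, k) * (if k = 1 then 1 else 0))
     - (if 4 \<le> c then 1 else 0) * (\<Sum>k\<in>{0..<n}. X $$ (r, k) * (if k = 2 then 1 else 0))"
    by (simp add: sum_subtractf sum_distrib_left)
  also have "\<dots> = X $$ (r, c) - (if c = 3 then X $$ (r, 1) else 0) - (if 4 \<le> c then X $$ (r, 2) else 0)"
    using n c by (simp only: sum_delta_aux[OF finite_atLeastLessThan]) auto
  finally show ?thesis .
qed

lemma mult_Qi_right: assumes X: "X \<in> carrier_mat n n" and n: "4 \<le> n" and r: "r < n" and c: "c < n"
  shows "(X * Qi n) $$ (r, c) = X $$ (r, c) + (if c = 3 then X $$ (r, 1) else 0) + (if 4 \<le> c then X $$ (r, 2) else 0)"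
proof -
  have "(X * Qi n) $$ (r, c) = (\<Sum>k\<in>{0..<n}. X $$ (r, k) * ((if k = c then 1 else 0) + (if k = 1 \<and> c = 3 then 1 else 0)
      + (if k = 2 \<and> 4 \<le> c then 1 else 0)))"
    using X r c by (simp add: Qi_def scalar_prod_def)
  also have "\<dots> = (\<Sum>k\<in>{0..<n}. X $$ (r, k) * (if k = c then 1 else 0)
     + (if c = 3 then 1 else 0) * (X $$ (r, k) * (if k = 1 then 1 else 0))
     + (if 4 \<le> c then 1 else 0) * (X $$ (r, k) * (if k = 2 then 1 else 0)))"
    by (rule sum.cong) auto
  also have "\<dots> = (\<Sum>k\<in>{0..<n}. X $$ (r, k) * (if k = c then 1 else 0))
     + (if c = 3 then 1 else 0) * (\<Sum>k\<in>{0..<n}. X $$ (r, k) * (if k = 1 then 1 else 0))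
     + (if 4 \<le> c then 1 else 0) * (\<Sum>k\<in>{0..<n}. X $$ (r, k) * (if k = 2 then 1 else 0))"
    by (simp add: sum.distrib sum_distrib_left)
  also have "\<dots> = X $$ (r, c) + (if c = 3 then X $$ (r, 1) else 0) + (if 4 \<le> c then X $$ (r, 2) else 0)"
    using n c by (simp only: sum_delta_aux[OF finite_atLeastLessThan]) auto
  finally show ?thesis .
qed

lemma mult_Qi_left: assumes X: "X \<in> carrier_mat n n" and n: "4 \<le> n" and r: "r < n" and c: "c < n"
  shows "(Qi n * X) $$ (r, c) = X $$ (r, c) + (if r = 1 then X $$ (3, c) else 0)
     + (if r = 2 then (\<Sum>k\<in>{4..<n}. X $$ (k, c)) else 0)"
proof -
  have "(Qi n * X) $$ (r, c) = (\<Sum>k\<in>{0..<n}. ((if r = k then 1 else 0) + (if r = 1 \<and> k = 3 then 1 else 0)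
      + (if r = 2 \<and> 4 \<le> k then 1 else 0)) * X $$ (k, c))"
    using X r c by (simp add: Qi_def scalar_prod_def mult.commute)
  also have "\<dots> = (\<Sum>k\<in>{0..<n}. X $$ (k, c) * (if k = r then 1 else 0)
     + (if r = 1 then 1 else 0) * (X $$ (k, c) * (if k = 3 then 1 else 0))
     + (if r = 2 then 1 else 0) * (if 4 \<le> k then X $$ (k, c) else 0))"
    by (rule sum.cong) auto
  also have "\<dots> = (\<Sum>k\<in>{0..<n}. X $$ (k, c) * (if k = r then 1 else 0))
     + (if r = 1 then 1 else 0) * (\<Sum>k\<in>{0..<n}. X $$ (k, c) * (if k = 3 then 1 else 0))
     + (if r = 2 then 1 else 0) * (\<Sum>k\<in>{0..<n}. if 4 \<le> k then X $$ (k, c) else 0)"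
    by (simp add: sum.distrib sum_distrib_left)
  also have "(\<Sum>k\<in>{0..<n}. if 4 \<le> k then X $$ (k, c) else 0) = (\<Sum>k\<in>{4..<n}. X $$ (k, c))"
  proof -
    have "(\<Sum>k\<in>{0..<n}. if 4 \<le> k then X $$ (k, c) else 0) = (\<Sum>k\<in>{0..<n} \<inter> {k. 4 \<le> k}. X $$ (k, c))"
      by (simp add: sum.inter_restrict)
    also have "{0..<n} \<inter> {k. 4 \<le> k} = {4..<n}" by auto
    finally show ?thesis .
  qed
  also have "(\<Sum>k\<in>{0..<n}. X $$ (k, c) * (if k = r then 1 else 0)) = X $$ (r, c)"
    using r by (simp only: sum_delta_aux[OF finite_atLeastLessThan]) auto
  also have "(\<Sum>k\<in>{0..<n}. X $$ (k, c) * (if k = 3 then 1 else 0)) = X $$ (3, c)"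
    using n by (simp only: sum_delta_aux[OF finite_atLeastLessThan]) auto
  finally show ?thesis by simp
qed

lemma Qi_Qm: assumes "4 \<le> n" shows "Qi n * Qm n = 1\<^sub>m n" "Qm n * Qi n = 1\<^sub>m n"
proof -
  have Qi: "Qi n \<in> carrier_mat n n" and Qm: "Qm n \<in> carrier_mat n n" by (auto simp: Qi_def Qm_def)
  show "Qi n * Qm n = 1\<^sub>m n"
  proof (rule eq_matI)
    fix i j assume ij: "i < dim_row (1\<^sub>m n)" "j < dim_col (1\<^sub>m n)"
    then have "(Qi n * Qm n) $$ (i, j) = Qi n $$ (i, j) - (if j = 3 then Qi n $$ (i, 1) else 0)
      - (if 4 \<le> j then Qi n $$ (i, 2) else 0)" using mult_Qm[OF Qi assms] by simp
    then show "(Qi n * Qm n) $$ (i, j) = 1\<^sub>m n $$ (i, j)" using ij assms by (simp add: Qi_def)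
  qed (use Qi Qm in auto)
  show "Qm n * Qi n = 1\<^sub>m n"
  proof (rule eq_matI)
    fix i j assume ij: "i < dim_row (1\<^sub>m n)" "j < dim_col (1\<^sub>m n)"
    then have "(Qm n * Qi n) $$ (i, j) = Qm n $$ (i, j) + (if j = 3 then Qm n $$ (i, 1) else 0)
      + (if 4 \<le> j then Qm n $$ (i, 2) else 0)" using mult_Qi_right[OF Qm assms] by simp
    then show "(Qm n * Qi n) $$ (i, j) = 1\<^sub>m n $$ (i, j)" using ij assms by (simp add: Qm_def)
  qed (use Qi Qm in auto)
qed


definition pmat :: "nat \<Rightarrow> (nat \<Rightarrow> nat) \<Rightarrow> 'a :: comm_ring_1 mat" where
  "pmat n \<sigma> = mat n n (\<lambda>(r, k). if \<sigma> r = k then 1 else 0)"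

lemma pmat_left: assumes Y: "Y \<in> carrier_mat n n" and r: "r < n" and c: "c < n" and s: "\<sigma> r < n"
  shows "(pmat n \<sigma> * Y) $$ (r, c) = Y $$ (\<sigma> r, c)"
proof -
  have "(pmat n \<sigma> * Y) $$ (r, c) = (\<Sum>k\<in>{0..<n}. (if \<sigma> r = k then 1 else 0) * Y $$ (k, c))"
    using Y r c by (simp add: pmat_def scalar_prod_def)
  also have "\<dots> = (\<Sum>k\<in>{0..<n}. if \<sigma> r = k then Y $$ (k, c) else 0)"
    by (rule sum.cong) auto
  also have "\<dots> = Y $$ (\<sigma> r, c)" using s by (simp add: sum.delta)
  finally show ?thesis .
qed

lemma pmat_right: assumes Y: "Y \<in> carrier_mat n n" and r: "r < n" and c: "c < n" and s: "\<sigma> c < n"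
  shows "(Y * transpose_mat (pmat n \<sigma>)) $$ (r, c) = Y $$ (r, \<sigma> c)"
proof -
  have "(Y * transpose_mat (pmat n \<sigma>)) $$ (r, c) = (\<Sum>k\<in>{0..<n}. Y $$ (r, k) * (if \<sigma> c = k then 1 else 0))"
    using Y r c by (simp add: pmat_def scalar_prod_def)
  also have "\<dots> = (\<Sum>k\<in>{0..<n}. if \<sigma> c = k then Y $$ (r, k) else 0)"
    by (rule sum.cong) auto
  also have "\<dots> = Y $$ (r, \<sigma> c)" using s by (simp add: sum.delta)
  finally show ?thesis .
qed

lemma cp_perm:
  fixes g :: "nat \<Rightarrow> nat \<Rightarrow> 'a :: comm_ring_1"
  assumes bij: "bij_betw \<sigma> {0..<n} {0..<n}"
  shows "char_poly (mat n n (\<lambda>(r, s). g (\<sigma> r) (\<sigma> s))) = char_poly (mat n n (\<lambda>(r, s). g r s))"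
proof -
  define \<tau> where "\<tau> = inv_into {0..<n} \<sigma>"
  have bt: "bij_betw \<tau> {0..<n} {0..<n}" unfolding \<tau>_def by (rule bij_betw_inv_into[OF bij])
  have sl: "\<sigma> r < n" if "r < n" for r using bij that unfolding bij_betw_def by auto
  have tl: "\<tau> r < n" if "r < n" for r using bt that unfolding bij_betw_def by auto
  have st: "\<sigma> (\<tau> r) = r" if "r < n" for r
    unfolding \<tau>_def using bij that by (simp add: bij_betw_inv_into_right)
  have ts: "\<tau> (\<sigma> r) = r" if "r < n" for r
    unfolding \<tau>_def using bij that by (simp add: bij_betw_inv_into_left)
  let ?P = "pmat n \<sigma> :: 'a mat"
  let ?Q = "transpose_mat (pmat n \<sigma>) :: 'a mat"
  have QP: "?Q = pmat n \<tau>"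
    by (rule eq_matI) (auto simp: pmat_def intro: st ts dest: tl sl)
  let ?A = "mat n n (\<lambda>(r, s). g (\<sigma> r) (\<sigma> s))"
  let ?B = "mat n n (\<lambda>(r, s). g r s)"
  have P: "?P \<in> carrier_mat n n" and Q: "?Q \<in> carrier_mat n n" by (auto simp: pmat_def)
  have "similar_mat ?A ?B"
  proof (rule similar_matI[where P = ?P and Q = ?Q and n = n])
    show "{?A, ?B, ?P, ?Q} \<subseteq> carrier_mat n n" using P Q by auto
    show "?P * ?Q = 1\<^sub>m n"
    proof (rule eq_matI)
      fix i j assume ij: "i < dim_row (1\<^sub>m n)" "j < dim_col (1\<^sub>m n)"
      then have "(?P * ?Q) $$ (i, j) = ?Q $$ (\<sigma> i, j)" using pmat_left[OF Q] sl by simp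
      also have "\<dots> = (if \<sigma> j = \<sigma> i then 1 else 0)" using ij sl by (simp add: pmat_def)
      also have "\<dots> = 1\<^sub>m n $$ (i, j)" using ij bij unfolding bij_betw_def inj_on_def by auto
      finally show "(?P * ?Q) $$ (i, j) = 1\<^sub>m n $$ (i, j)" .
    qed (use P Q in auto)
    show "?Q * ?P = 1\<^sub>m n"
    proof (rule eq_matI)
      fix i j assume ij: "i < dim_row (1\<^sub>m n)" "j < dim_col (1\<^sub>m n)"
      then have "(?Q * ?P) $$ (i, j) = ?P $$ (\<tau> i, j)" unfolding QP using pmat_left[OF P] tl by simp
      also have "\<dots> = (if \<sigma> (\<tau> i) = j then 1 else 0)" using ij tl by (simp add: pmat_def)
      also have "\<dots> = 1\<^sub>m n $$ (i, j)" using ij st by auto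
      finally show "(?Q * ?P) $$ (i, j) = 1\<^sub>m n $$ (i, j)" .
    qed (use P Q in auto)
    show "?A = ?P * ?B * ?Q"
    proof (rule eq_matI)
      fix i j assume ij: "i < dim_row (?P * ?B * ?Q)" "j < dim_col (?P * ?B * ?Q)"
      then have ij': "i < n" "j < n" using P Q by auto
      have PB: "?P * ?B \<in> carrier_mat n n" using P by simp
      have "(?P * ?B * ?Q) $$ (i, j) = (?P * ?B) $$ (i, \<sigma> j)" using pmat_right[OF PB] ij' sl by simp
      also have "\<dots> = ?B $$ (\<sigma> i, \<sigma> j)" using pmat_left[of ?B n i "\<sigma> j" \<sigma>] ij' sl by simp
      also have "\<dots> = ?A $$ (i, j)" using ij' sl by simp
      finally show "?A $$ (i, j) = (?P * ?B * ?Q) $$ (i, j)" by simp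
    qed (use P Q in auto)
  qed
  then show ?thesis by (rule char_poly_similar)
qed


lemma cp3_general: fixes g :: "nat \<Rightarrow> nat \<Rightarrow> int"
  shows "char_poly (mat 3 3 (\<lambda>(r, c). g r c)) =
    [:0,1:]^3 - [:g 0 0 + g 1 1 + g 2 2:] * [:0,1:]^2
    + [:g 0 0 * g 1 1 - g 0 1 * g 1 0 + g 0 0 * g 2 2 - g 0 2 * g 2 0 + g 1 1 * g 2 2 - g 1 2 * g 2 1:] * [:0,1:]
    - [:g 0 0 * (g 1 1 * g 2 2 - g 1 2 * g 2 1) - g 1 0 * (g 0 1 * g 2 2 - g 0 2 * g 2 1)
        + g 2 0 * (g 0 1 * g 1 2 - g 0 2 * g 1 1):]"
  unfolding char_poly_def
  apply (subst det3)
   apply (simp add: char_poly_matrix_def)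
  apply (simp add: char_poly_matrix_def numeral_2_eq_2 numeral_3_eq_3)
  apply (simp add: algebra_simps)
  done

lemma cp3_block: fixes g :: "nat \<Rightarrow> nat \<Rightarrow> int"
  assumes "g 0 0 = 2" "g 0 1 = 2" "g 0 2 = 3" "g 1 0 = 4" "g 1 1 = 3" "g 1 2 = 4"
    "g 2 0 = 3 * int N" "g 2 1 = 2 * int N" "g 2 2 = 2 * int N - 1"
  shows "char_poly (mat 3 3 (\<lambda>(r, c). g r c)) = qpoly N"
  unfolding cp3_general assms qpoly_def
  by (simp add: power2_eq_square power3_eq_cube algebra_simps)

lemma cp3_small: fixes g :: "nat \<Rightarrow> nat \<Rightarrow> int"
  assumes "g 0 0 = 2" "g 0 1 = 2" "g 0 2 = 2" "g 1 0 = 2" "g 1 1 = 1" "g 1 2 = 2"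
    "g 2 0 = 2" "g 2 1 = 2" "g 2 2 = 1"
  shows "char_poly (mat 3 3 (\<lambda>(r, c). g r c)) = qpoly 0"
  unfolding cp3_general assms qpoly_def
  by (simp add: power2_eq_square power3_eq_cube algebra_simps)


definition Kc :: "nat \<Rightarrow> nat \<Rightarrow> nat \<Rightarrow> int" where
  "Kc v x y = (if x = 0 \<and> y = 0 then 2 else if x = 0 then (if y = 1 \<or> y = v then 2 else 3)
     else if y = 0 then (if x = 1 \<or> x = v then 2 else 3) else if x = y then 1 else 2)"

lemma S_eval: assumes "4 \<le> n"
  shows "(\<Sum>k\<in>{4..<n}. Kc 3 k c) = (if c = 0 then 3 else 2) * int (n - 4) - (if 4 \<le> c \<and> c < n then 1 else 0)"
proof -
  have "(\<Sum>k\<in>{4..<n}. Kc 3 k c) = (\<Sum>k\<in>{4..<n}. (if c = 0 then 3 else 2) - (if k = c then 1 else 0))"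
    by (rule sum.cong) (auto simp: Kc_def)
  also have "\<dots> = (if c = 0 then 3 else 2) * int (n - 4) - (if 4 \<le> c \<and> c < n then 1 else 0)"
    by (simp add: sum_subtractf sum.delta')
  finally show ?thesis .
qed

lemma cp_K4: assumes n: "4 \<le> n"
  shows "char_poly (mat n n (\<lambda>(r, c). Kc 3 r c)) = [:1, 1:] ^ (n - 3) * qpoly (n - 3)"
proof -
  let ?K = "mat n n (\<lambda>(r, c). Kc 3 r c)"
  define X where "X = Qi n * ?K"
  define K' where "K' = X * Qm n"
  have K: "?K \<in> carrier_mat n n" by simp
  have Qi: "Qi n \<in> carrier_mat n n" and Qm: "Qm n \<in> carrier_mat n n" by (auto simp: Qi_def Qm_def)
  have X: "X \<in> carrier_mat n n" unfolding X_def using Qi K by simp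
  have K': "K' \<in> carrier_mat n n" unfolding K'_def using X Qm by simp
  have "similar_mat K' ?K"
    by (rule similar_matI[where P = "Qi n" and Q = "Qm n" and n = n]) (use K K' Qi Qm Qi_Qm[OF n] in \<open>auto simp: K'_def X_def\<close>)
  then have cpeq: "char_poly ?K = char_poly K'" by (simp add: char_poly_similar)
  have Xe: "X $$ (r, c) = Kc 3 r c + (if r = 1 then Kc 3 3 c else 0)
     + (if r = 2 then (if c = 0 then 3 else 2) * int (n - 4) - (if 4 \<le> c \<and> c < n then 1 else 0) else 0)"
    if "r < n" "c < n" for r c
    unfolding X_def using mult_Qi_left[OF K n that] that n by (simp add: S_eval[OF n])
  have K'e: "K' $$ (r, c) = X $$ (r, c) - (if c = 3 then X $$ (r, 1) else 0) - (if 4 \<le> c then X $$ (r, 2) else 0)"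
    if "r < n" "c < n" for r c
    unfolding K'_def using mult_Qm[OF X n that] .
  define g where "g r c = K' $$ (r, c)" for r c
  have Kg: "K' = mat n n (\<lambda>(r, c). g r c)"
    by (rule eq_matI) (use K' in \<open>auto simp: g_def\<close>)
  have col: "g r c = (if r = c then -1 else 0)" if "r < n" "c < n" "3 \<le> c" for r c
    unfolding g_def K'e[OF that(1,2)] using that n by (auto simp: Xe Kc_def)
  have "char_poly K' = [:1, 1:] ^ (n - 3) * char_poly (mat 3 3 (\<lambda>(r, c). g r c))"
    unfolding Kg by (rule char_poly_reduce3) (use n col in auto)
  also have "char_poly (mat 3 3 (\<lambda>(r, c). g r c)) = qpoly (n - 3)"
    by (rule cp3_block) (use n in \<open>auto simp: g_def K'e Xe Kc_def\<close>)
  finally show ?thesis using cpeq by simp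
qed


lemma tau_exists:
  fixes i j n v :: nat
  assumes ij: "1 \<le> i" "i < n" "1 \<le> j" "j < n" "i \<noteq> j"
    and v: "v = (if n = 3 then 2 else 3)" and n3: "3 \<le> n"
    and fE: "{i, j} \<notin> star_edges n"
    and cB: "card (star_edges n \<union> {{i, j}}) = n"
  obtains \<tau> where "bij_betw \<tau> (star_edges n \<union> {{i, j}}) {0..<n}"
    "\<tau> {i, j} = 0" "\<tau> {0, i} = 1" "\<tau> {0, j} = v"
    "\<And>e. e \<in> star_edges n \<union> {{i, j}} \<Longrightarrow> e \<noteq> {i, j} \<Longrightarrow> e \<noteq> {0, i} \<Longrightarrow> e \<noteq> {0, j} \<Longrightarrow> \<tau> e \<notin> {0, 1, v}"
proof -
  let ?B = "star_edges n \<union> {{i, j}}"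
  let ?A3 = "{{i, j}, {0, i}, {0, j}}"
  let ?T3 = "{0, 1, v}"
  let ?O = "?B - ?A3"
  let ?T = "{0..<n} - ?T3"
  have e0i: "{0, i} \<in> star_edges n" "{0, j} \<in> star_edges n" using ij by (auto simp: star_edge_in)
  have d3: "{i, j} \<noteq> {0, i}" "{i, j} \<noteq> {0, j}" "{0, i} \<noteq> {0, j}"
    using ij by (auto simp: doubleton_eq_iff)
  have A3B: "?A3 \<subseteq> ?B" using e0i by auto
  have finB: "finite ?B" using finite_star_edges by simp
  have d3': "{0, i} \<noteq> {i, j}" "{0, j} \<noteq> {i, j}" "{0, j} \<noteq> {0, i}" using d3 by metis+
  have m1: "{i, j} \<notin> {{0, i}, {0, j}}" "{0, i} \<notin> {{0, j}}" using d3 by auto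
  have c2: "card {{0, i}, {0, j}} = Suc (card {{0, j}})" by (rule card_insert_disjoint) (use m1 in auto)
  have c3: "card ?A3 = Suc (card {{0, i}, {0, j}})" by (rule card_insert_disjoint) (use m1 in auto)
  have cA3: "card ?A3 = 3" using c2 c3 by simp
  have cT3: "card ?T3 = 3" using v by (simp add: card_insert_if)
  have T3n: "?T3 \<subseteq> {0..<n}" using v n3 by auto
  have cO: "card ?O = n - 3" using card_Diff_subset[OF _ A3B] cA3 cB by simp
  have cT: "card ?T = n - 3" using card_Diff_subset[OF _ T3n] cT3 by simp
  obtain \<phi> where \<phi>: "bij_betw \<phi> ?O ?T"
    using finite_same_card_bij[of ?O ?T] cO cT finB by auto
  define h3 where "h3 e = (if e = {i, j} then 0 else if e = {0, i} then 1 else (v::nat))" for e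
  have h3: "bij_betw h3 ?A3 ?T3"
    unfolding bij_betw_def inj_on_def h3_def using d3 v by auto
  define \<tau> where "\<tau> e = (if e \<in> ?A3 then h3 e else \<phi> e)" for e
  have b1: "bij_betw \<tau> (?A3 \<union> ?O) (?T3 \<union> ?T)"
    unfolding \<tau>_def by (rule bij_betw_disjoint_Un[OF h3 \<phi>]) auto
  have eq1: "?A3 \<union> ?O = ?B" by (simp only: Un_Diff_cancel) (rule Un_absorb1[OF A3B])
  have eq2: "?T3 \<union> ?T = {0..<n}" using T3n by auto
  have bij: "bij_betw \<tau> ?B {0..<n}" using b1 unfolding eq1 eq2 .
  show ?thesis
  proof (rule that[OF bij])
    show "\<tau> {i, j} = 0" "\<tau> {0, i} = 1" "\<tau> {0, j} = v" unfolding \<tau>_def h3_def using d3 by auto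
    fix e assume "e \<in> ?B" "e \<noteq> {i, j}" "e \<noteq> {0, i}" "e \<noteq> {0, j}"
    then have "e \<in> ?O" by auto
    then have "\<phi> e \<in> ?T" using bij_betwE[OF \<phi>] by blast
    moreover have "e \<notin> ?A3" using \<open>e \<in> ?O\<close> by blast
    then have "\<tau> e = \<phi> e" unfolding \<tau>_def by simp
    ultimately show "\<tau> e \<notin> ?T3" by simp
  qed
qed

lemma key_entry:
  fixes i j n v :: nat and \<tau> :: "nat set \<Rightarrow> nat"
  assumes ij: "1 \<le> i" "i < n" "1 \<le> j" "j < n" "i \<noteq> j" and v0: "v \<noteq> 0"
    and t0: "\<tau> {i, j} = 0"
    and tE0: "\<And>k. 1 \<le> k \<Longrightarrow> k < n \<Longrightarrow> \<tau> {0, k} \<noteq> 0"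
    and tU: "\<And>k. 1 \<le> k \<Longrightarrow> k < n \<Longrightarrow> (\<tau> {0, k} = 1 \<or> \<tau> {0, k} = v) \<longleftrightarrow> (k = i \<or> k = j)"
    and tinj: "inj_on \<tau> (star_edges n \<union> {{i, j}})"
    and e: "e \<in> star_edges n \<union> {{i, j}}" and e': "e' \<in> star_edges n \<union> {{i, j}}"
  shows "steiner2 (star_edges n) e e' = Kc v (\<tau> e) (\<tau> e')"
proof -
  have sub: "x \<subseteq> {..<n}" and two: "\<exists>a b. a \<in> x \<and> b \<in> x \<and> a \<noteq> b" if "x \<in> star_edges n \<union> {{i, j}}" for x
    using that ij by (auto simp: star_edges_def)
  obtain a b where ab: "a \<in> e" "b \<in> e" "a \<noteq> b" using two[OF e] by blast
  have sd: "steiner2 (star_edges n) e e' = int (card ((e \<union> e') - {0}))"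
    unfolding steiner2_def using sd_star[of "e \<union> e'" n a b] sub[OF e] sub[OF e'] ab by auto
  have cases: "x = {i, j} \<or> (\<exists>k. x = {0, k} \<and> 1 \<le> k \<and> k < n)" if "x \<in> star_edges n \<union> {{i, j}}" for x
    using that by (auto simp: star_edges_def)
  have ei: "{0, k} \<in> star_edges n \<union> {{i, j}}" if "1 \<le> k" "k < n" for k using that by (auto simp: star_edge_in)
  have kf: "Kc v 0 (\<tau> {0, k}) = (if k = i \<or> k = j then 2 else 3)"
    "Kc v (\<tau> {0, k}) 0 = (if k = i \<or> k = j then 2 else 3)" if k: "1 \<le> k" "k < n" for k
  proof -
    have a: "\<tau> {0, k} \<noteq> 0" by (rule tE0[OF k])
    have b: "(\<tau> {0, k} = 1 \<or> \<tau> {0, k} = v) = (k = i \<or> k = j)" by (rule tU[OF k])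
    show "Kc v 0 (\<tau> {0, k}) = (if k = i \<or> k = j then 2 else 3)"
      unfolding Kc_def using a b by presburger
    show "Kc v (\<tau> {0, k}) 0 = (if k = i \<or> k = j then 2 else 3)"
      unfolding Kc_def using a b by presburger
  qed
  have cf: "card (({i, j} \<union> {0, k}) - {0}) = (if k = i \<or> k = j then 2 else 3)"
     "card (({0, k} \<union> {i, j}) - {0}) = (if k = i \<or> k = j then 2 else 3)" if k: "1 \<le> k" "k < n" for k
  proof -
    have "({i, j} \<union> {0, k}) - {0} = {i, j, k}" "({0, k} \<union> {i, j}) - {0} = {i, j, k}" using ij k by auto
    moreover have "card {i, j, k} = (if k = i \<or> k = j then 2 else 3)" using ij k by (auto simp: card_insert_if)
    ultimately show "card (({i, j} \<union> {0, k}) - {0}) = (if k = i \<or> k = j then 2 else 3)"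
     "card (({0, k} \<union> {i, j}) - {0}) = (if k = i \<or> k = j then 2 else 3)" by simp_all
  qed
  show ?thesis
  proof (cases "e = {i, j}")
    case True
    note eT = this
    show ?thesis
    proof (cases "e' = {i, j}")
      case True
      have "({i, j} \<union> {i, j}) - {0} = {i, j}" using ij by auto
      then have "card ((e \<union> e') - {0}) = 2" using ij eT True by simp
      then show ?thesis using eT True sd t0 by (simp add: Kc_def)
    next
      case False
      then obtain k where k: "e' = {0, k}" "1 \<le> k" "k < n" using cases[OF e'] by auto
      show ?thesis unfolding sd unfolding eT k(1) t0 kf[OF k(2,3)] cf[OF k(2,3)] by simp
    qed
  next
    case False
    then obtain k where k: "e = {0, k}" "1 \<le> k" "k < n" using cases[OF e] by auto
    show ?thesis
    proof (cases "e' = {i, j}")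
      case True
      show ?thesis unfolding sd unfolding True k(1) t0 kf[OF k(2,3)] cf[OF k(2,3)] by simp
    next
      case False
      then obtain k' where k': "e' = {0, k'}" "1 \<le> k'" "k' < n" using cases[OF e'] by auto
      have "({0, k} \<union> {0, k'}) - {0} = {k, k'}" using k k' by auto
      then have c: "card (({0, k} \<union> {0, k'}) - {0}) = (if k = k' then 1 else 2)" by simp
      have i: "\<tau> {0, k} = \<tau> {0, k'} \<longleftrightarrow> k = k'"
        using inj_onD[OF tinj _ ei[OF k(2,3)] ei[OF k'(2,3)]] by (auto simp: doubleton_eq_iff)
      have "Kc v (\<tau> {0, k}) (\<tau> {0, k'}) = (if k = k' then 1 else 2)"
        unfolding Kc_def using tE0[OF k(2,3)] tE0[OF k'(2,3)] i by simp
      then show ?thesis unfolding sd unfolding k(1) k'(1) c by simp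
    qed
  qed
qed


theorem theorem5p4:
  fixes n i j t :: nat and b :: "nat \<Rightarrow> nat set"
  assumes "i < n" "j < n" "i \<noteq> j"
    and "{i, j} \<notin> star_edges n"
    and "bij_betw b {0..<n} (star_edges n \<union> {{i, j}})"
    and "t \<le> n"
    and "\<bar>coeff (char_poly (mat n n (\<lambda>(r, s). steiner2 (star_edges n) (b r) (b s)))) t\<bar>
         = Max {\<bar>coeff (char_poly (mat n n (\<lambda>(r, s). steiner2 (star_edges n) (b r) (b s)))) k\<bar>
                | k. k \<le> n}"
  shows "(n - 2) div 2 \<le> t \<and> t \<le> (n + 1) div 2"
proof -
  note in_n = assms(1,2) and ij = assms(3) and fE = assms(4) and bb = assms(5) and tn = assms(6) and mx = assms(7)
  let ?B = "star_edges n \<union> {{i, j}}"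
  let ?M = "mat n n (\<lambda>(r, s). steiner2 (star_edges n) (b r) (b s))"
  have i1: "1 \<le> i"
  proof (rule ccontr)
    assume "\<not> 1 \<le> i"
    then have "i = 0" by simp
    then have "{i, j} \<in> star_edges n" using ij in_n by (auto simp: star_edge_in)
    then show False using fE by simp
  qed
  have j1: "1 \<le> j"
  proof (rule ccontr)
    assume "\<not> 1 \<le> j"
    then have "j = 0" by simp
    then have "{i, j} \<in> star_edges n" using ij in_n by (auto simp: star_edge_in insert_commute)
    then show False using fE by simp
  qed
  have n3: "3 \<le> n" using i1 j1 in_n ij by linarith
  define v where "v = (if n = 3 then 2 else (3::nat))"
  have v0: "v \<noteq> 0" "v \<noteq> 1" unfolding v_def by auto
  have cB: "card ?B = n" using bij_betw_same_card[OF bb] by simp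
  obtain \<tau> where tb: "bij_betw \<tau> ?B {0..<n}" and t0: "\<tau> {i, j} = 0" and t1: "\<tau> {0, i} = 1"
    and tv: "\<tau> {0, j} = v"
    and to: "\<And>e. e \<in> ?B \<Longrightarrow> e \<noteq> {i, j} \<Longrightarrow> e \<noteq> {0, i} \<Longrightarrow> e \<noteq> {0, j} \<Longrightarrow> \<tau> e \<notin> {0, 1, v}"
    using tau_exists[OF i1 in_n(1) j1 in_n(2) ij v_def n3 fE cB] by blast
  have ek: "{0, k} \<in> ?B" "{0, k} \<noteq> {i, j}" if "1 \<le> k" "k < n" for k
    using that i1 j1 by (auto simp: star_edge_in doubleton_eq_iff)
  have tE0: "\<tau> {0, k} \<noteq> 0" if k: "1 \<le> k" "k < n" for k
  proof -
    consider "k = i" | "k = j" | "k \<noteq> i" "k \<noteq> j" by blast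
    then show ?thesis
    proof cases
      case 3
      then have "{0, k} \<noteq> {0, i}" "{0, k} \<noteq> {0, j}" by (auto simp: doubleton_eq_iff)
      then show ?thesis using to[OF ek[OF k]] by auto
    qed (use t1 tv v0 in auto)
  qed
  have tU: "(\<tau> {0, k} = 1 \<or> \<tau> {0, k} = v) \<longleftrightarrow> (k = i \<or> k = j)" if k: "1 \<le> k" "k < n" for k
  proof -
    consider "k = i" | "k = j" | "k \<noteq> i" "k \<noteq> j" by blast
    then show ?thesis
    proof cases
      case 3
      then have "{0, k} \<noteq> {0, i}" "{0, k} \<noteq> {0, j}" by (auto simp: doubleton_eq_iff)
      then show ?thesis using to[OF ek[OF k]] 3 by auto
    qed (use t1 tv v0 in auto)
  qed
  have tinj: "inj_on \<tau> ?B" using tb unfolding bij_betw_def by simp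
  define \<sigma> where "\<sigma> = \<tau> \<circ> b"
  have sb: "bij_betw \<sigma> {0..<n} {0..<n}" unfolding \<sigma>_def by (rule bij_betw_trans[OF bb tb])
  have bB: "b r \<in> ?B" if "r < n" for r using bij_betwE[OF bb] that by auto
  have Meq: "?M = mat n n (\<lambda>(r, s). Kc v (\<sigma> r) (\<sigma> s))"
  proof (rule eq_matI)
    fix r s assume rs: "r < dim_row (mat n n (\<lambda>(r, s). Kc v (\<sigma> r) (\<sigma> s)))"
      "s < dim_col (mat n n (\<lambda>(r, s). Kc v (\<sigma> r) (\<sigma> s)))"
    then have rs': "r < n" "s < n" by auto
    have "steiner2 (star_edges n) (b r) (b s) = Kc v (\<tau> (b r)) (\<tau> (b s))"
      by (rule key_entry[OF i1 in_n(1) j1 in_n(2) ij v0(1) t0 tE0 tU tinj bB[OF rs'(1)] bB[OF rs'(2)]])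
    then show "?M $$ (r, s) = mat n n (\<lambda>(r, s). Kc v (\<sigma> r) (\<sigma> s)) $$ (r, s)"
      using rs' by (simp add: \<sigma>_def)
  qed auto
  have cpK: "char_poly (mat n n (\<lambda>(r, s). Kc v r s)) = [:1, 1:] ^ (n - 3) * qpoly (n - 3)"
  proof (cases "n = 3")
    case True
    then have "v = 2" unfolding v_def by simp
    have "char_poly (mat 3 3 (\<lambda>(r, s). Kc 2 r s)) = qpoly 0"
      by (rule cp3_small) (auto simp: Kc_def)
    then show ?thesis using True \<open>v = 2\<close> by simp
  next
    case False
    then have "v = 3" "4 \<le> n" unfolding v_def using n3 by auto
    then show ?thesis using cp_K4 by simp
  qed
  have cp: "char_poly ?M = [:1, 1:] ^ (n - 3) * qpoly (n - 3)"
    unfolding Meq cp_perm[OF sb, of "Kc v"] cpK ..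
  define N where "N = n - 3"
  have nN: "n = N + 3" unfolding N_def using n3 by simp
  define a where "a k = coeff (char_poly ?M) k" for k
  have a: "a k = - bco N (int k)" for k unfolding a_def cp N_def by (rule coeff_final)
  have "(N + 1) div 2 \<le> t \<and> t \<le> (N + 4) div 2"
    by (rule argmax[OF a]) (use tn mx nN in \<open>auto simp: a_def\<close>)
  moreover have "n - 2 = N + 1" "n + 1 = N + 4" using nN by simp_all
  ultimately show ?thesis by (simp only:)
qed


end
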